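(* Let $G=(V,E)$ be a finite graph and $\psi:(0,+\infty)\to\mathbb R$ a $C^1$ concave function with $\psi'(1)=0$. Suppose a function $f:V\times(0,\infty)\to(0,\infty)$ satisfies $$\Gamma^\psi(f)\le\frac{D_1}{t}+D_2\quad\text{at all vertices and all }t>0$$ for some positive constants $D_1,D_2$. Then for all $x,y\in V$ and $t>0$, $$f(x,t)\le f(y,t)\exp\left\{d(x,y)\sqrt{\frac{H_\psi\mu_{\max}}{w_{\min}}}\sqrt{\frac{D_1}{t}+D_2}\right\}.$$
   Context: Graphs: $G=(V,E)$ is a connected, locally finite graph; each edge $xy$ carries a weight $w_{xy}>0$, and $\mu:V\to(0,\infty)$ is a vertex measure; $y\sim x$ means $xy\in E$; $d$ is the graph distance; $\mu_{\max}=\max_x\mu(x)$, $w_{\min}=\min_{xy\in E}w_{xy}$. Laplacian: $\Delta f(x)=\frac{1}{\mu(x)}\sum_{y\sim x}w_{xy}(f(y)-f(x))$. For $f:V\to(0,\infty)$: $\Delta^\psi f(x)=\Delta\big[\psi\big(\tfrac{f}{f(x)}\big)\big](x)$; $\overline\psi(s)=\psi'(1)(s-1)-(\psi(s)-\psi(1))$, $\Gamma^\psi f=\Delta^{\overline\psi}f$ (applied to $f(\cdot,t)$ at each time). Harnack constant: $H_\psi=\sup_{x>1}\frac{\log^2x}{\overline\psi(x)}$ (assumed finite). *)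

theory Defs
  imports "HOL-Analysis.Analysis"
begin

definition weighted_graph ::
  "'a set \<Rightarrow> ('a \<Rightarrow> 'a \<Rightarrow> bool) \<Rightarrow> ('a \<Rightarrow> 'a \<Rightarrow> real) \<Rightarrow> ('a \<Rightarrow> real) \<Rightarrow> bool" where
  "weighted_graph V E w mu \<longleftrightarrow>
     (\<forall>x y. E x y \<longrightarrow> x \<in> V \<and> y \<in> V) \<and>
     (\<forall>x y. E x y \<longrightarrow> E y x) \<and>
     (\<forall>x y. E x y \<longrightarrow> w x y = w y x \<and> w x y > 0) \<and>
     (\<forall>x\<in>V. mu x > 0)"

definition is_walk :: "'a set \<Rightarrow> ('a \<Rightarrow> 'a \<Rightarrow> bool) \<Rightarrow> (nat \<Rightarrow> 'a) \<Rightarrow> nat \<Rightarrow> 'a \<Rightarrow> 'a \<Rightarrow> bool" where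
  "is_walk V E p n x y \<longleftrightarrow> p 0 = x \<and> p n = y \<and> (\<forall>i\<le>n. p i \<in> V) \<and> (\<forall>i<n. E (p i) (p (Suc i)))"

definition connected_graph :: "'a set \<Rightarrow> ('a \<Rightarrow> 'a \<Rightarrow> bool) \<Rightarrow> bool" where
  "connected_graph V E \<longleftrightarrow> (\<forall>x\<in>V. \<forall>y\<in>V. \<exists>p n. is_walk V E p n x y)"

definition gdist :: "'a set \<Rightarrow> ('a \<Rightarrow> 'a \<Rightarrow> bool) \<Rightarrow> 'a \<Rightarrow> 'a \<Rightarrow> nat" where
  "gdist V E x y = (LEAST n. \<exists>p. is_walk V E p n x y)"

definition mu_max :: "'a set \<Rightarrow> ('a \<Rightarrow> real) \<Rightarrow> real" where
  "mu_max V mu = Max (mu ` V)"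

definition w_min :: "('a \<Rightarrow> 'a \<Rightarrow> bool) \<Rightarrow> ('a \<Rightarrow> 'a \<Rightarrow> real) \<Rightarrow> real" where
  "w_min E w = Min {w x y | x y. E x y}"

definition laplacian ::
  "'a set \<Rightarrow> ('a \<Rightarrow> 'a \<Rightarrow> bool) \<Rightarrow> ('a \<Rightarrow> 'a \<Rightarrow> real) \<Rightarrow> ('a \<Rightarrow> real) \<Rightarrow> ('a \<Rightarrow> real) \<Rightarrow> 'a \<Rightarrow> real" where
  "laplacian V E w mu f x = (1 / mu x) * (\<Sum>y\<in>{y\<in>V. E x y}. w x y * (f y - f x))"

definition psibar :: "(real \<Rightarrow> real) \<Rightarrow> real \<Rightarrow> real" where
  "psibar psi s = deriv psi 1 * (s - 1) - (psi s - psi 1)"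

definition laplacian_phi ::
  "'a set \<Rightarrow> ('a \<Rightarrow> 'a \<Rightarrow> bool) \<Rightarrow> ('a \<Rightarrow> 'a \<Rightarrow> real) \<Rightarrow> ('a \<Rightarrow> real) \<Rightarrow> (real \<Rightarrow> real) \<Rightarrow> ('a \<Rightarrow> real) \<Rightarrow> 'a \<Rightarrow> real" where
  "laplacian_phi V E w mu phi f x = laplacian V E w mu (\<lambda>y. phi (f y / f x)) x"

definition Gamma_psi ::
  "'a set \<Rightarrow> ('a \<Rightarrow> 'a \<Rightarrow> bool) \<Rightarrow> ('a \<Rightarrow> 'a \<Rightarrow> real) \<Rightarrow> ('a \<Rightarrow> real) \<Rightarrow> (real \<Rightarrow> real) \<Rightarrow> ('a \<Rightarrow> real) \<Rightarrow> 'a \<Rightarrow> real" where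
  "Gamma_psi V E w mu psi f x = laplacian_phi V E w mu (psibar psi) f x"

text \<open>Harnack constant H_psi = sup_{x>1} log^2 x / psibar x, and its finiteness
  (which includes psibar x > 0 for x > 1, otherwise the quotient is +infinity).\<close>
definition harnack_const :: "(real \<Rightarrow> real) \<Rightarrow> real" where
  "harnack_const psi = (SUP x\<in>{1<..}. (ln x)\<^sup>2 / psibar psi x)"

definition harnack_finite :: "(real \<Rightarrow> real) \<Rightarrow> bool" where
  "harnack_finite psi \<longleftrightarrow> (\<forall>x>1. psibar psi x > 0) \<and>
      bdd_above ((\<lambda>x. (ln x)\<^sup>2 / psibar psi x) ` {1<..})"

end

theory Submission
  imports Defs
begin

theorem mainTheorem14:
  fixes V :: "'a set" and E :: "'a \<Rightarrow> 'a \<Rightarrow> bool" and w :: "'a \<Rightarrow> 'a \<Rightarrow> real"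
    and mu :: "'a \<Rightarrow> real" and psi psi' :: "real \<Rightarrow> real"
    and f :: "'a \<Rightarrow> real \<Rightarrow> real" and D1 D2 :: real
  assumes graph: "weighted_graph V E w mu"
    and finV: "finite V"
    and conn: "connected_graph V E"
    and psi_deriv: "\<And>s. s > 0 \<Longrightarrow> (psi has_real_derivative psi' s) (at s)"
    and psi'_cont: "continuous_on {0<..} psi'"
    and psi_concave: "concave_on {0<..} psi"
    and psi'_1: "psi' 1 = 0"
    and H_fin: "harnack_finite psi"
    and f_pos: "\<And>x t. x \<in> V \<Longrightarrow> t > 0 \<Longrightarrow> f x t > 0"
    and D1: "D1 > 0" and D2: "D2 > 0"
    and grad: "\<And>x t. x \<in> V \<Longrightarrow> t > 0 \<Longrightarrow>
                 Gamma_psi V E w mu psi (\<lambda>y. f y t) x \<le> D1 / t + D2"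
    and x: "x \<in> V" and y: "y \<in> V" and t: "t > 0"
  shows "f x t \<le> f y t * exp (real (gdist V E x y)
            * sqrt (harnack_const psi * mu_max V mu / w_min E w)
            * sqrt (D1 / t + D2))"
proof -
  define C where "C = D1 / t + D2"
  have Cpos: "C > 0" using D1 D2 t unfolding C_def by (simp add: add_pos_pos)
  define H where "H = harnack_const psi"
  define mm where "mm = mu_max V mu"
  define wm where "wm = w_min E w"
  define K where "K = sqrt (H * mm / wm) * sqrt C"
  have Eprops: "\<And>a b. E a b \<Longrightarrow> a \<in> V \<and> b \<in> V \<and> E b a \<and> w a b = w b a \<and> w a b > 0"
    using graph unfolding weighted_graph_def by blast
  have mupos: "\<And>a. a \<in> V \<Longrightarrow> mu a > 0"
    using graph unfolding weighted_graph_def by blast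
  have d1: "deriv psi 1 = 0"
    using DERIV_imp_deriv[OF psi_deriv[of 1]] psi'_1 by simp
  have pb1: "psibar psi 1 = 0" unfolding psibar_def by simp
  have pbnn: "psibar psi s \<ge> 0" if s: "s > 0" for s
  proof -
    have cv: "convex_on {0<..} (\<lambda>x. - psi x)"
      using psi_concave by (simp add: convex_on_iff_concave)
    have "(\<lambda>x. - psi x) s - (\<lambda>x. - psi x) 1 \<ge> (- psi' 1) * (s - 1)"
    proof (rule convex_on_imp_above_tangent[OF cv])
      show "connected {0::real<..}" by (simp add: is_interval_connected)
      show "(1::real) \<in> interior {0<..}" by (simp add: interior_open)
      show "s \<in> {0<..}" using s by simp
      show "((\<lambda>x. - psi x) has_field_derivative - psi' 1) (at 1 within {0<..})"
        using has_field_derivative_at_within[OF DERIV_minus[OF psi_deriv[of 1]]] by simp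
    qed
    then show ?thesis unfolding psibar_def using d1 psi'_1 by simp
  qed
  have Hpos_fin: "bdd_above ((\<lambda>x. (ln x)\<^sup>2 / psibar psi x) ` {1<..})"
    and pbpos: "\<And>s. s > 1 \<Longrightarrow> psibar psi s > 0"
    using H_fin unfolding harnack_finite_def by auto
  have Hup: "(ln s)\<^sup>2 / psibar psi s \<le> H" if "s > 1" for s
    unfolding H_def harnack_const_def
    by (rule cSUP_upper[OF _ Hpos_fin]) (use that in auto)
  have H0: "H \<ge> 0"
  proof -
    have "0 \<le> (ln 2)\<^sup>2 / psibar psi 2" using pbpos[of 2] by simp
    also have "\<dots> \<le> H" using Hup[of 2] by simp
    finally show ?thesis .
  qed
  have edge: "f b t \<le> f a t * exp K" if ab: "E a b" for a b
  proof -
    obtain aV: "a \<in> V" and bV: "b \<in> V" and wpos: "w a b > 0" using Eprops[OF ab] by blast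
    have fa: "f a t > 0" and fb: "f b t > 0" using f_pos aV bV t by auto
    define W where "W = {w x y | x y. E x y}"
    have Wsub: "W \<subseteq> (\<lambda>(x,y). w x y) ` (V \<times> V)"
      unfolding W_def using Eprops by fastforce
    have finW: "finite W" using finite_subset[OF Wsub] finV by auto
    have wabW: "w a b \<in> W" unfolding W_def using ab by blast
    have wm_le: "wm \<le> w a b" unfolding wm_def w_min_def W_def[symmetric]
      using Min_le[OF finW wabW] .
    have wm_pos: "wm > 0" unfolding wm_def w_min_def W_def[symmetric]
      using finW wabW Eprops unfolding W_def by (subst Min_gr_iff) auto
    have mm_ge: "mu a \<le> mm" unfolding mm_def mu_max_def using finV aV by simp
    have mm_pos: "mm > 0" using mm_ge mupos[OF aV] by simp
    have K0: "K \<ge> 0" unfolding K_def using H0 mm_pos wm_pos Cpos by simp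
    show ?thesis
    proof (cases "f b t / f a t > 1")
      case False
      then have "f b t \<le> f a t" using fa by (simp add: field_simps)
      also have "\<dots> \<le> f a t * exp K" using fa K0 by simp
      finally show ?thesis .
    next
      case True
      define s where "s = f b t / f a t"
      have s1: "s > 1" using True s_def by simp
      define N where "N = {z \<in> V. E a z}"
      have finN: "finite N" unfolding N_def using finV by simp
      have bN: "b \<in> N" unfolding N_def using bV ab by simp
      have G: "(1 / mu a) * (\<Sum>z\<in>N. w a z * (psibar psi (f z t / f a t) - psibar psi (f a t / f a t))) \<le> C"
        using grad[OF aV t] unfolding C_def Gamma_psi_def laplacian_phi_def laplacian_def N_def .
      have eq: "f a t / f a t = 1" using fa by simp
      have terms: "\<And>z. z \<in> N \<Longrightarrow> 0 \<le> w a z * (psibar psi (f z t / f a t) - psibar psi (f a t / f a t))"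
      proof -
        fix z assume "z \<in> N"
        then have "E a z" "z \<in> V" unfolding N_def by auto
        then have "w a z > 0" "f z t > 0" using Eprops f_pos t by auto
        then show "0 \<le> w a z * (psibar psi (f z t / f a t) - psibar psi (f a t / f a t))"
          using pbnn[of "f z t / f a t"] fa eq pb1 by simp
      qed
      have "w a b * psibar psi s \<le> (\<Sum>z\<in>N. w a z * (psibar psi (f z t / f a t) - psibar psi (f a t / f a t)))"
      proof -
        have T: "w a b * (psibar psi (f b t / f a t) - psibar psi (f a t / f a t)) \<le> (\<Sum>z\<in>N. w a z * (psibar psi (f z t / f a t) - psibar psi (f a t / f a t)))"
          by (rule member_le_sum[OF bN _ finN]) (use terms in blast)
        then show ?thesis using eq pb1 s_def by simp
      qed
      also have "\<dots> \<le> mu a * C" using G mupos[OF aV] by (simp add: field_simps)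
      also have "\<dots> \<le> mm * C" using mm_ge Cpos by simp
      finally have A: "w a b * psibar psi s \<le> mm * C" .
      have ps: "psibar psi s > 0" using pbpos s1 by simp
      have "wm * psibar psi s \<le> w a b * psibar psi s" using wm_le ps by simp
      with A have B: "psibar psi s \<le> mm * C / wm" using wm_pos by (simp add: field_simps)
      have "(ln s)\<^sup>2 \<le> H * psibar psi s" using Hup[OF s1] ps by (simp add: field_simps)
      also have "\<dots> \<le> H * (mm * C / wm)" using mult_left_mono[OF B H0] by simp
      finally have "(ln s)\<^sup>2 \<le> H * mm / wm * C" by simp
      then have "sqrt ((ln s)\<^sup>2) \<le> sqrt (H * mm / wm * C)" by (rule real_sqrt_le_mono)
      moreover have "sqrt (H * mm / wm * C) = K" unfolding K_def by (rule real_sqrt_mult)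
      ultimately have "ln s \<le> K" using s1 by simp
      then have "s \<le> exp K" using s1 by (metis exp_ln less_trans zero_less_one exp_le_cancel_iff)
      then show ?thesis using fa unfolding s_def by (simp add: field_simps)
    qed
  qed
  have walk: "\<And>i. i \<le> n \<Longrightarrow> f (p 0) t \<le> f (p i) t * exp (real i * K)"
    if pw: "is_walk V E p n x y" for p n
  proof -
    fix i show "i \<le> n \<Longrightarrow> f (p 0) t \<le> f (p i) t * exp (real i * K)"
    proof (induction i)
      case 0 then show ?case by simp
    next
      case (Suc i)
      then have IH: "f (p 0) t \<le> f (p i) t * exp (real i * K)" by simp
      have e: "E (p i) (p (Suc i))" using pw Suc.prems unfolding is_walk_def by simp
      have "f (p i) t \<le> f (p (Suc i)) t * exp K"
        using edge[of "p (Suc i)" "p i"] Eprops[OF e] by blast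
      then have "f (p i) t * exp (real i * K) \<le> f (p (Suc i)) t * exp K * exp (real i * K)"
        by simp
      also have "\<dots> = f (p (Suc i)) t * exp (real (Suc i) * K)"
        by (simp add: exp_add[symmetric] algebra_simps)
      finally show ?case using IH by simp
    qed
  qed
  have ex: "\<exists>n p. is_walk V E p n x y" using conn x y unfolding connected_graph_def by blast
  then have "\<exists>p. is_walk V E p (gdist V E x y) x y"
    unfolding gdist_def by (rule LeastI_ex)
  then obtain p where pw: "is_walk V E p (gdist V E x y) x y" by blast
  have "f (p 0) t \<le> f (p (gdist V E x y)) t * exp (real (gdist V E x y) * K)"
    using walk[OF pw, of "gdist V E x y"] by simp
  then show ?thesis using pw unfolding is_walk_def K_def H_def mm_def wm_def C_def
    by (simp add: mult.assoc)
qed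

end
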